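(* Let $\varphi:\mathbb{H}\to\mathbb{H}$ be a linear isometry with $\varphi(1)=1$. Then $\varphi(\varphi(x)x)=\varphi(x)x$ for all $x\in\mathbb{H}$ if and only if $\varphi\in\{I_{\mathbb{H}}\}\cup\mathcal{I}_1^-$. In particular $I_{\mathbb{H}}$ is the only proper linear isometry satisfying this condition.
   Context: $\mathbb{H}$ is the quaternions with Euclidean norm. $\mathcal{I}_1^-$ is the set of involutive linear isometries of $\mathbb{H}$ with negative determinant fixing $1$; equivalently $\mathcal{I}_1^-=\{\sigma_{\mathbb{H}}\}\cup\{x\mapsto a\bar x\bar a: a\in\mathrm{Im}(\mathbb{H}),\ |a|=1\}$, where $\sigma_{\mathbb{H}}(x)=\bar x$. A proper isometry is one with positive determinant. *)

theory Defs
  imports "HOL-Analysis.Analysis"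
begin

text \<open>The quaternions are modelled as Euclidean 4-space, coordinates
 (1, i, j, k) = components 1,2,3,4; the norm is the Euclidean norm.\<close>

type_synonym quat = "real^4"

definition qone :: quat where
  "qone = vector [1, 0, 0, 0]"

definition qmul :: "quat \<Rightarrow> quat \<Rightarrow> quat" where
  "qmul x y = vector
    [x$1*y$1 - x$2*y$2 - x$3*y$3 - x$4*y$4,
     x$1*y$2 + x$2*y$1 + x$3*y$4 - x$4*y$3,
     x$1*y$3 - x$2*y$4 + x$3*y$1 + x$4*y$2,
     x$1*y$4 + x$2*y$3 - x$3*y$2 + x$4*y$1]"

definition lin_isometry :: "(quat \<Rightarrow> quat) \<Rightarrow> bool" where
  "lin_isometry f \<longleftrightarrow> linear f \<and> (\<forall>x. norm (f x) = norm x)"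

definition I1_minus :: "(quat \<Rightarrow> quat) set" where
  "I1_minus = {f. lin_isometry f \<and> (\<forall>x. f (f x) = x) \<and> det (matrix f) < 0 \<and> f qone = qone}"

end

theory Submission
  imports Defs
begin

lemma vector_4 [simp]:
 "(vector [x,y,z,w] ::('a::zero)^4)$1 = x"
 "(vector [x,y,z,w] ::('a::zero)^4)$2 = y"
 "(vector [x,y,z,w] ::('a::zero)^4)$3 = z"
 "(vector [x,y,z,w] ::('a::zero)^4)$4 = w"
  unfolding vector_def by simp_all

definition cr :: "quat \<Rightarrow> quat \<Rightarrow> quat" where
  "cr u w = vector [0, u$3*w$4 - u$4*w$3, u$4*w$2 - u$2*w$4, u$2*w$3 - u$3*w$2]"

lemma det_4b:
  fixes A :: "'a::comm_ring_1^4^4"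
  assumes "\<And>j. A$1$j = (if j = 1 then 1 else 0)" "\<And>i. A$i$1 = (if i = 1 then 1 else 0)"
  shows "det A =
    A$2$2 * A$3$3 * A$4$4 +
    A$2$3 * A$3$4 * A$4$2 +
    A$2$4 * A$3$2 * A$4$3 -
    A$2$2 * A$3$4 * A$4$3 -
    A$2$3 * A$3$2 * A$4$4 -
    A$2$4 * A$3$3 * A$4$2"
proof -
  have f1: "finite {2::4, 3, 4}" "1 \<notin> {2::4, 3, 4}" by auto
  have f2: "finite {3::4, 4}" "2 \<notin> {3::4, 4}" by auto
  have f3: "finite {4::4}" "3 \<notin> {4::4}" by auto
  show ?thesis
    unfolding det_def UNIV_4
    unfolding sum_over_permutations_insert[OF f1]
    unfolding sum_over_permutations_insert[OF f2]
    unfolding sum_over_permutations_insert[OF f3]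
    unfolding permutes_sing
    by (simp add: assms sign_swap_id permutation_swap_id sign_compose sign_id swap_id_eq algebra_simps)
qed

lemma cofactor:
  fixes M :: "real^4^4"
  assumes "\<And>j. M$1$j = (if j = 1 then 1 else 0)" "\<And>i. M$i$1 = (if i = 1 then 1 else 0)"
  shows "transpose M *v cr (M *v u) (M *v w) = det M *\<^sub>R cr u w"
  apply (subst det_4b[OF assms])
  apply (simp add: vec_eq_iff forall_4 cr_def matrix_vector_mult_def sum_4 transpose_def assms)
  apply (simp add: algebra_simps)
  done

lemma qmul_add_left: "qmul (x + y) z = qmul x z + qmul y z"
  by (simp add: vec_eq_iff forall_4 qmul_def algebra_simps)
lemma qmul_add_right: "qmul z (x + y) = qmul z x + qmul z y"
  by (simp add: vec_eq_iff forall_4 qmul_def algebra_simps)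
lemma qmul_scale_left: "qmul (c *\<^sub>R x) z = c *\<^sub>R qmul x z"
  by (simp add: vec_eq_iff forall_4 qmul_def algebra_simps)
lemma qmul_scale_right: "qmul z (c *\<^sub>R x) = c *\<^sub>R qmul z x"
  by (simp add: vec_eq_iff forall_4 qmul_def algebra_simps)
lemma qmul_one_left: "qmul qone x = x"
  by (simp add: vec_eq_iff forall_4 qmul_def qone_def)
lemma qmul_one_right: "qmul x qone = x"
  by (simp add: vec_eq_iff forall_4 qmul_def qone_def)
lemma qmul_im: "y$1 = 0 \<Longrightarrow> x$1 = 0 \<Longrightarrow>
   qmul y x = (-(y$2*x$2+y$3*x$3+y$4*x$4)) *\<^sub>R qone + cr y x"
  by (simp add: vec_eq_iff forall_4 qmul_def qone_def cr_def algebra_simps)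
lemma cr_anti: "cr u w = - cr w u"
  by (simp add: vec_eq_iff forall_4 cr_def algebra_simps)

lemma key:
  fixes M :: "real^4^4"
  assumes r1: "\<And>j. M$1$j = (if j = 1 then 1 else 0)" and c1: "\<And>i. M$i$1 = (if i = 1 then 1 else 0)"
    and sym: "transpose M = M" and inv: "\<And>v. M *v (M *v v) = v"
  shows "M *v cr (M *v v) v = - (det M *\<^sub>R cr (M *v v) v)"
proof -
  have "M *v cr (M *v v) v = transpose M *v cr (M *v v) (M *v (M *v v))"
    using sym inv by simp
  also have "\<dots> = det M *\<^sub>R cr v (M *v v)" by (rule cofactor[OF r1 c1])
  also have "\<dots> = - (det M *\<^sub>R cr (M *v v) v)" using cr_anti[of v "M *v v"] by simp
  finally show ?thesis .
qed

lemma mv_qone: 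
  fixes M :: "real^4^4"
  assumes "\<And>i. M$i$1 = (if i = 1 then 1 else 0)" shows "M *v qone = qone"
  by (simp add: vec_eq_iff forall_4 matrix_vector_mult_def sum_4 qone_def assms)

lemma mv_im:
  fixes M :: "real^4^4"
  assumes "\<And>j. M$1$j = (if j = 1 then 1 else 0)" "v$1 = 0" shows "(M *v v)$1 = 0"
  by (simp add: matrix_vector_mult_def sum_4 assms)

lemma cond_im:
  fixes M :: "real^4^4"
  assumes r1: "\<And>j. M$1$j = (if j = 1 then 1 else 0)" and c1: "\<And>i. M$i$1 = (if i = 1 then 1 else 0)"
    and v1: "v$1 = 0"
  shows "M *v qmul (M *v v) v = qmul (M *v v) v \<longleftrightarrow> M *v cr (M *v v) v = cr (M *v v) v"
proof -
  have m1: "(M *v v)$1 = 0" using mv_im[OF r1 v1] .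
  show ?thesis
    unfolding qmul_im[OF m1 v1]
    by (simp add: matrix_vector_right_distrib matrix_vector_mult_scaleR mv_qone[OF c1])
qed

theorem lemma8:
  fixes \<phi> :: "quat \<Rightarrow> quat"
  assumes "lin_isometry \<phi>" and "\<phi> qone = qone"
  shows "((\<forall>x. \<phi> (qmul (\<phi> x) x) = qmul (\<phi> x) x) \<longleftrightarrow> (\<phi> = id \<or> \<phi> \<in> I1_minus))
       \<and> ((det (matrix \<phi>) > 0 \<and> (\<forall>x. \<phi> (qmul (\<phi> x) x) = qmul (\<phi> x) x)) \<longleftrightarrow> \<phi> = id)"
proof -
  define M where "M = matrix \<phi>"
  have lin: "linear \<phi>" using assms(1) unfolding lin_isometry_def by simp
  have ot: "orthogonal_transformation \<phi>" using assms(1) unfolding lin_isometry_def orthogonal_transformation by simp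
  have om: "orthogonal_matrix M" unfolding M_def using ot orthogonal_transformation_matrix by blast
  have phiM: "\<And>x. \<phi> x = M *v x" unfolding M_def using ot orthogonal_transformation_matrix by force
  have c1: "M$i$1 = (if i = 1 then 1 else 0)" for i
  proof -
    have "(M *v qone)$i = qone$i" using assms(2) phiM by simp
    then show ?thesis using exhaust_4[of i]
      by (auto simp: matrix_vector_mult_def sum_4 qone_def)
  qed
  have tm: "transpose M ** M = mat 1" using om orthogonal_matrix_def by blast
  have r1: "M$1$j = (if j = 1 then 1 else 0)" for j
  proof -
    have "(transpose M ** M)$1$j = (mat 1 :: real^4^4)$1$j" using tm by simp
    then show ?thesis
      by (simp add: matrix_matrix_mult_def sum_4 transpose_def c1 mat_def)
  qed
  have detpm: "det M = 1 \<or> det M = -1" using det_orthogonal_matrix[OF om] .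
  have symm: "transpose M = M" if inv: "\<And>v. M *v (M *v v) = v"
  proof -
    have "M ** M = mat 1"
      using inv by (simp add: matrix_eq matrix_vector_mul_assoc[symmetric])
    then have "transpose M = transpose M ** (M ** M)" by simp
    also have "\<dots> = M" by (simp add: matrix_mul_assoc tm)
    finally show ?thesis .
  qed
  have C_inv: "\<phi> (\<phi> v) = v" if C: "\<forall>x. \<phi> (qmul (\<phi> x) x) = qmul (\<phi> x) x" for v
  proof -
    have a: "\<phi> (qmul (\<phi> v) v) = qmul (\<phi> v) v" using C by blast
    have b: "\<phi> (qmul (\<phi> (qone + v)) (qone + v)) = qmul (\<phi> (qone + v)) (qone + v)" using C by blast
    have e: "qmul (\<phi> (qone + v)) (qone + v) = qone + v + \<phi> v + qmul (\<phi> v) v"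
      using assms(2) by (simp add: linear_add[OF lin] qmul_add_left qmul_add_right qmul_one_left qmul_one_right)
    have "\<phi> (qone + v + \<phi> v + qmul (\<phi> v) v) = qone + \<phi> v + \<phi> (\<phi> v) + qmul (\<phi> v) v"
      using a assms(2) by (simp add: linear_add[OF lin])
    then show ?thesis using b e by (simp add: algebra_simps)
  qed
  have Mgen: "\<phi> = (\<lambda>x. M *v x)" using phiM by auto
  have minus_C: "\<forall>x. \<phi> (qmul (\<phi> x) x) = qmul (\<phi> x) x" if "\<phi> \<in> I1_minus"
  proof
    fix x
    have inv: "\<And>v. M *v (M *v v) = v" using that phiM unfolding I1_minus_def by auto
    have dm: "det M = -1" using that detpm unfolding I1_minus_def M_def by auto
    have sy: "transpose M = M" using symm[OF inv] .
    define v where "v = x - (x$1) *\<^sub>R qone"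
    have v1: "v$1 = 0" by (simp add: v_def qone_def)
    have xv: "x = (x$1) *\<^sub>R qone + v" by (simp add: v_def)
    have k: "M *v cr (M *v v) v = cr (M *v v) v" using key[OF r1 c1 sy inv, of v] dm by simp
    have q: "M *v qmul (M *v v) v = qmul (M *v v) v" using cond_im[OF r1 c1 v1] k by simp
    have mq: "M *v qone = qone" using mv_qone[OF c1] .
    define a where "a = x$1"
    have xv': "x = a *\<^sub>R qone + v" by (simp add: a_def v_def)
    have mx: "M *v x = a *\<^sub>R qone + M *v v"
      by (subst xv') (simp add: matrix_vector_right_distrib matrix_vector_mult_scaleR mq)
    have P: "qmul (M *v x) x = (a*a) *\<^sub>R qone + (a *\<^sub>R v + (a *\<^sub>R (M *v v) + qmul (M *v v) v))"
    proof -
      have e: "qmul (M *v x) x = qmul (a *\<^sub>R qone + M *v v) (a *\<^sub>R qone + v)"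
        by (simp only: mx) (subst xv', rule refl)
      show ?thesis unfolding e
      apply (simp only: qmul_add_left qmul_add_right qmul_scale_left qmul_scale_right qmul_one_left qmul_one_right)
      apply (simp add: scaleR_add_right)
      done
    qed
    have "M *v qmul (M *v x) x = (a*a) *\<^sub>R qone + (a *\<^sub>R (M *v v) + (a *\<^sub>R v + qmul (M *v v) v))"
      unfolding P by (simp add: matrix_vector_right_distrib matrix_vector_mult_scaleR mq inv q)
    also have "\<dots> = qmul (M *v x) x" unfolding P by (simp add: ac_simps)
    finally show "\<phi> (qmul (\<phi> x) x) = qmul (\<phi> x) x" unfolding Mgen .
  qed
  have plus_id: "\<phi> = id" if C: "\<forall>x. \<phi> (qmul (\<phi> x) x) = qmul (\<phi> x) x" and d: "det M = 1"
  proof -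
    have inv: "\<And>v. M *v (M *v v) = v" using C_inv[OF C] phiM by simp
    have sy: "transpose M = M" using symm[OF inv] .
    have z: "cr (M *v v) v = 0" if v1: "v$1 = 0" for v
    proof -
      have "M *v cr (M *v v) v = cr (M *v v) v"
        using cond_im[OF r1 c1 v1] C phiM by simp
      then have h: "cr (M *v v) v = - cr (M *v v) v" using key[OF r1 c1 sy inv, of v] d by simp
      show ?thesis using h by (metis scaleR_2 right_minus scaleR_eq_0_iff zero_neq_numeral)
    qed
    have z2: "cr (M *v vector [0,1,0,0]) (vector [0,1,0,0]) = 0" by (rule z) simp
    have z3: "cr (M *v vector [0,0,1,0]) (vector [0,0,1,0]) = 0" by (rule z) simp
    have z4: "cr (M *v vector [0,0,0,1]) (vector [0,0,0,1]) = 0" by (rule z) simp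
    have z23: "cr (M *v vector [0,1,1,0]) (vector [0,1,1,0]) = 0" by (rule z) simp
    have z24: "cr (M *v vector [0,1,0,1]) (vector [0,1,0,1]) = 0" by (rule z) simp
    have e2: "M$3$2 = 0" "M$4$2 = 0" using z2 by (simp_all add: vec_eq_iff forall_4 cr_def matrix_vector_mult_def sum_4)
    have e3: "M$2$3 = 0" "M$4$3 = 0" using z3 by (simp_all add: vec_eq_iff forall_4 cr_def matrix_vector_mult_def sum_4)
    have e4: "M$2$4 = 0" "M$3$4 = 0" using z4 by (simp_all add: vec_eq_iff forall_4 cr_def matrix_vector_mult_def sum_4)
    have e23: "M$2$2 = M$3$3" using z23 e2 e3 e4 by (simp add: vec_eq_iff forall_4 cr_def matrix_vector_mult_def sum_4 c1)
    have e24: "M$2$2 = M$4$4" using z24 e2 e3 e4 by (simp add: vec_eq_iff forall_4 cr_def matrix_vector_mult_def sum_4 c1)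
    have "det M = M$2$2 * M$2$2 * M$2$2"
      using det_4b[of M] r1 c1 e2 e3 e4 e23 e24 by simp
    then have cube: "M$2$2 * M$2$2 * M$2$2 = 1" using d by simp
    have a1: "M$2$2 = 1"
    proof -
      have "(M$2$2 - 1) * (M$2$2 * M$2$2 + M$2$2 + 1) = 0" using cube by (simp add: algebra_simps)
      moreover have "M$2$2 * M$2$2 + M$2$2 + 1 > 0"
      proof -
        have "0 \<le> (M$2$2 + 1/2) * (M$2$2 + 1/2)" by simp
        then show ?thesis by (simp add: algebra_simps)
      qed
      ultimately show ?thesis by simp
    qed
    have "M = mat 1"
      using r1 c1 e2 e3 e4 e23 e24 a1
      by (simp add: vec_eq_iff forall_4 mat_def)
    then show ?thesis using Mgen by (auto simp: fun_eq_iff)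
  qed
  have fwd: "\<phi> = id \<or> \<phi> \<in> I1_minus" if C: "\<forall>x. \<phi> (qmul (\<phi> x) x) = qmul (\<phi> x) x"
  proof (cases "det M = 1")
    case True then show ?thesis using plus_id[OF C] by simp
  next
    case False
    then have "det M = -1" using detpm by simp
    then show ?thesis using assms C_inv[OF C] unfolding I1_minus_def M_def by auto
  qed
  have idC: "\<forall>x. \<phi> (qmul (\<phi> x) x) = qmul (\<phi> x) x" if "\<phi> = id" using that by simp
  have detid: "det (matrix (id :: quat \<Rightarrow> quat)) = 1" by (simp add: matrix_id_mat_1)
  show ?thesis
    using fwd minus_C idC detid unfolding I1_minus_def by auto
qed

end
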